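(* Let $d$ be a positive integer and $S=\langle 2\rangle\oplus\langle -2d\rangle$. Then $$|\mathrm O(q_S)|=\begin{cases}2^{1+\rho(d)}&\text{if } d\equiv -1\bmod 4\text{ or } 8\mid d,\\ 2^{\rho(d)}&\text{otherwise,}\end{cases}$$ where $\rho(d)$ is the number of distinct prime divisors of $d$.
   Context: $\langle a\rangle$ denotes the rank-one lattice $\mathbb Z e$ with $(e,e)=a$. For an even lattice $S$, $A_S=S^\vee/S$ is its discriminant group with quadratic form $q_S:A_S\to\mathbb Q/2\mathbb Z$, $q_S(x)=(x,x)\bmod 2\mathbb Z$, and $\mathrm O(q_S)$ is the group of automorphisms of $A_S$ preserving $q_S$. Here $A_S\cong\mathbb Z/2\mathbb Z\times\mathbb Z/2d\mathbb Z$. *)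

theory Defs
  imports Complex_Main "HOL-Computational_Algebra.Primes"
begin

text \<open>The rank-two diagonal lattice <a> (+) <b> is Z^2 inside Q^2, with
  bilinear form B(x,y) = a x1 y1 + b x2 y2.\<close>

definition diag_form :: "int \<Rightarrow> int \<Rightarrow> rat \<times> rat \<Rightarrow> rat \<times> rat \<Rightarrow> rat" where
  "diag_form a b x y = of_int a * fst x * fst y + of_int b * snd x * snd y"

definition dual_lattice :: "int \<Rightarrow> int \<Rightarrow> (rat \<times> rat) set" where
  "dual_lattice a b =
     {x. \<forall>m n :: int. diag_form a b x (of_int m, of_int n) \<in> \<int>}"

definition frac_vec :: "rat \<times> rat \<Rightarrow> rat \<times> rat" where
  "frac_vec x = (frac (fst x), frac (snd x))"

text \<open>Discriminant group A_S = S^vee / S, as the set of canonical representatives.\<close>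
definition disc_group :: "int \<Rightarrow> int \<Rightarrow> (rat \<times> rat) set" where
  "disc_group a b = frac_vec ` dual_lattice a b"

definition disc_add :: "rat \<times> rat \<Rightarrow> rat \<times> rat \<Rightarrow> rat \<times> rat" where
  "disc_add x y = frac_vec (fst x + fst y, snd x + snd y)"

text \<open>Discriminant quadratic form q_S(x) = (x,x) mod 2Z: two values are equal
  in Q/2Z iff their difference lies in 2Z.\<close>
definition cong_mod2 :: "rat \<Rightarrow> rat \<Rightarrow> bool" where
  "cong_mod2 r s \<longleftrightarrow> (r - s) / 2 \<in> \<int>"

text \<open>O(q_S): group automorphisms of A_S preserving q_S (as functions
  extended by the identity outside A_S).\<close>
definition O_disc :: "int \<Rightarrow> int \<Rightarrow> ((rat \<times> rat) \<Rightarrow> (rat \<times> rat)) set" where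
  "O_disc a b =
     {f. bij_betw f (disc_group a b) (disc_group a b)
       \<and> (\<forall>x\<in>disc_group a b. \<forall>y\<in>disc_group a b.
             f (disc_add x y) = disc_add (f x) (f y))
       \<and> (\<forall>x\<in>disc_group a b. cong_mod2 (diag_form a b (f x) (f x)) (diag_form a b x x))
       \<and> (\<forall>x. x \<notin> disc_group a b \<longrightarrow> f x = x)}"

end

theory Submission
  imports Defs
begin

definition Sq :: "int \<Rightarrow> int set" where
  "Sq M = {t. 0 \<le> t \<and> t < M \<and> M dvd t^2 - 1}"

lemma Sq_sub: "Sq M \<subseteq> {0..<M}" unfolding Sq_def by auto

lemma Sq_finite[simp]: "finite (Sq M)"
  using Sq_sub finite_subset by blast

lemma dvd_mod_sq: fixes a t :: int
  shows "a dvd (t mod a)^2 - 1 \<longleftrightarrow> a dvd t^2 - 1"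
proof -
  have "(t mod a)^2 mod a = t^2 mod a" by (simp add: power_mod)
  then show ?thesis by (metis mod_eq_dvd_iff)
qed

lemma Sq_mult:
  fixes a b :: int
  assumes a: "0 < a" and b: "0 < b" and cop: "coprime a b"
  shows "card (Sq (a*b)) = card (Sq a) * card (Sq b)"
proof -
  let ?h = "\<lambda>t. (t mod a, t mod b)"
  have inj: "inj_on ?h (Sq (a*b))"
  proof
    fix x y assume x: "x \<in> Sq (a*b)" and y: "y \<in> Sq (a*b)" and e: "?h x = ?h y"
    have "a dvd x - y" "b dvd x - y" using e by (auto simp: mod_eq_dvd_iff)
    then have d: "a*b dvd x - y" using cop by (simp add: divides_mult)
    have "\<bar>x - y\<bar> < a*b" using x y unfolding Sq_def by auto
    then show "x = y" using d dvd_imp_le_int[of "x-y" "a*b"] a b by (cases "x = y") auto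
  qed
  have img: "?h ` Sq (a*b) = Sq a \<times> Sq b"
  proof
    show "?h ` Sq (a*b) \<subseteq> Sq a \<times> Sq b"
    proof
      fix z assume "z \<in> ?h ` Sq (a*b)"
      then obtain t where t: "t \<in> Sq (a*b)" and z: "z = ?h t" by blast
      then have "a*b dvd t^2 - 1" unfolding Sq_def by auto
      then have "a dvd t^2 - 1" "b dvd t^2 - 1" using dvd_mult_left dvd_mult_right by blast+
      then have "t mod a \<in> Sq a" "t mod b \<in> Sq b" using a b dvd_mod_sq unfolding Sq_def by auto
      then show "z \<in> Sq a \<times> Sq b" using z by simp
    qed
  next
    show "Sq a \<times> Sq b \<subseteq> ?h ` Sq (a*b)"
    proof clarify
      fix x y assume x: "x \<in> Sq a" and y: "y \<in> Sq b"
      obtain u v where uv: "u * a + v * b = 1"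
        using bezout_int[of a b] cop by (metis coprime_iff_gcd_eq_1)
      define t0 where "t0 = x * v * b + y * u * a"
      define t where "t = t0 mod (a*b)"
      have "t0 mod a = x mod a"
      proof -
        have vb: "v*b = 1 - u*a" using uv by linarith
        have "t0 - x = a * (y*u - x*u)" unfolding t0_def mult.assoc[of x v b] vb
          by (simp add: algebra_simps)
        then show ?thesis by (metis dvd_triv_left mod_eq_dvd_iff)
      qed
      moreover have "t0 mod b = y mod b"
      proof -
        have ua: "u*a = 1 - v*b" using uv by linarith
        have "t0 - y = b * (x*v - y*v)" unfolding t0_def mult.assoc[of y u a] ua
          by (simp add: algebra_simps)
        then show ?thesis by (metis dvd_triv_left mod_eq_dvd_iff)
      qed
      moreover have "t mod a = t0 mod a" unfolding t_def by (simp add: mod_mod_cancel)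
      moreover have "t mod b = t0 mod b" unfolding t_def by (simp add: mod_mod_cancel)
      moreover have "x mod a = x" "y mod b = y" using x y unfolding Sq_def by simp_all
      ultimately have ta: "t mod a = x" and tb: "t mod b = y" by simp_all
      have "a dvd t^2 - 1" using dvd_mod_sq[of a t] ta x unfolding Sq_def by auto
      moreover have "b dvd t^2 - 1" using dvd_mod_sq[of b t] tb y unfolding Sq_def by auto
      ultimately have "a*b dvd t^2 - 1" using cop by (simp add: divides_mult)
      moreover have "0 \<le> t" "t < a*b" unfolding t_def using a b by auto
      ultimately have "t \<in> Sq (a*b)" unfolding Sq_def by auto
      then show "(x, y) \<in> ?h ` Sq (a*b)" using ta tb by force
    qed
  qed
  have "card (Sq (a*b)) = card (Sq a \<times> Sq b)"
    using card_image[OF inj] img by simp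
  then show ?thesis by (simp add: card_cartesian_product)
qed

lemma dvd_range: fixes K u :: int
  assumes "0 < K" "K dvd u" "0 \<le> u" "u < n*K"
  shows "\<exists>c. 0 \<le> c \<and> c < n \<and> u = K*c"
proof -
  obtain c where c: "u = K*c" using assms(2) by blast
  have "0 \<le> c" using assms(1,3) c by (simp add: zero_le_mult_iff)
  moreover have "c < n" using assms(1,4) c by (simp add: mult.commute)
  ultimately show ?thesis using c by blast
qed

lemma sq_fact: fixes t :: int shows "t^2 - 1 = (t - 1) * (t + 1)"
  by (simp add: power2_eq_square algebra_simps)

lemma prime_power_dvd_cases:
  fixes p a b :: int
  assumes "prime p" "p^e dvd a * b" "\<not> (p dvd a \<and> p dvd b)"
  shows "p^e dvd a \<or> p^e dvd b"
proof (cases "p dvd a")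
  case True
  then have "\<not> p dvd b" using assms(3) by blast
  then have "coprime p b" using assms(1) prime_imp_coprime by blast
  then have "coprime (p^e) b" by simp
  then show ?thesis using assms(2) by (metis coprime_dvd_mult_left_iff)
next
  case False
  then have "coprime p a" using assms(1) prime_imp_coprime by blast
  then have "coprime (p^e) a" by simp
  then show ?thesis using assms(2) by (metis coprime_dvd_mult_right_iff)
qed

lemma Sq_odd_prime_power:
  fixes p :: int
  assumes p: "prime p" "odd p" and e: "0 < e"
  shows "card (Sq (p^e)) = 2"
proof -
  have p3: "3 \<le> p" using p prime_ge_2_int[of p] by presburger
  have "p \<le> p^e" using e p3 by (simp add: self_le_power)
  then have M3: "3 \<le> p^e" using p3 by linarith
  have "Sq (p^e) = {1, p^e - 1}"
  proof (intro set_eqI iffI)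
    fix t assume t: "t \<in> Sq (p^e)"
    then have d: "p^e dvd (t - 1) * (t + 1)" and t0: "0 \<le> t" "t < p^e"
      unfolding Sq_def by (auto simp: sq_fact)
    have nb: "\<not> (p dvd t - 1 \<and> p dvd t + 1)"
    proof
      assume "p dvd t - 1 \<and> p dvd t + 1"
      then have "p dvd (t + 1) - (t - 1)" by (meson dvd_diff)
      then have "p dvd 2" by simp
      then have "p \<le> 2" by (simp add: zdvd_imp_le)
      then show False using p3 by simp
    qed
    from prime_power_dvd_cases[OF p(1) d nb]
    show "t \<in> {1, p^e - 1}"
    proof
      assume h: "p^e dvd t - 1"
      show ?thesis
      proof (rule ccontr)
        assume "t \<notin> {1, p^e - 1}"
        then have "t - 1 \<noteq> 0" by simp
        from dvd_imp_le_int[OF this h] t0 M3 show False by simp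
      qed
    next
      assume h: "p^e dvd t + 1"
      have "p^e \<le> t + 1" using h t0 by (simp add: zdvd_imp_le)
      then show ?thesis using t0 by simp
    qed
  next
    fix t assume "t \<in> {1, p^e - 1}"
    then show "t \<in> Sq (p^e)"
    proof
      assume "t = 1" then show ?thesis using M3 unfolding Sq_def by simp
    next
      assume "t \<in> {p^e - 1}"
      then have t: "t = p^e - 1" by simp
      have "t^2 - 1 = p^e * (p^e - 2)" unfolding t by (simp add: power2_eq_square algebra_simps)
      then show ?thesis using M3 t unfolding Sq_def by simp
    qed
  qed
  then show ?thesis using M3 by simp
qed

lemma Sq_two_power:
  fixes i :: nat
  assumes i: "0 < i"
  shows "card (Sq (4 * 2^i)) = 4"
proof -
  define K :: int where "K = 2^i"
  have "(2::int)^1 \<le> 2^i" using i by (intro power_increasing) auto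
  then have K2: "2 \<le> K" unfolding K_def by simp
  have "Sq (4*K) = {1, 2*K - 1, 2*K + 1, 4*K - 1}"
  proof (intro set_eqI iffI)
    fix t assume t: "t \<in> Sq (4*K)"
    then have d: "4*K dvd t^2 - 1" and t0: "0 \<le> t" "t < 4*K" unfolding Sq_def by auto
    have "2 dvd 4*K" by simp
    then have "2 dvd t^2 - 1" using d by (rule dvd_trans)
    then have "odd t" by simp
    then obtain u where u: "t = 2*u + 1" by (metis oddE)
    have "t^2 - 1 = 4 * (u * (u+1))" unfolding u by (simp add: power2_eq_square algebra_simps)
    then have "4*K dvd 4 * (u * (u+1))" using d by simp
    then have "K dvd u * (u+1)" using dvd_times_left_cancel_iff[of 4 K "u*(u+1)"] by simp
    then have dK: "(2::int)^i dvd u * (u+1)" unfolding K_def .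
    have nb: "\<not> (2 dvd u \<and> 2 dvd u + 1)" by presburger
    have u0: "0 \<le> u" "u < 2*K" using t0 u by auto
    from prime_power_dvd_cases[OF _ dK nb]
    have "K dvd u \<or> K dvd u + 1" unfolding K_def by simp
    then show "t \<in> {1, 2*K - 1, 2*K + 1, 4*K - 1}"
    proof
      assume "K dvd u"
      from dvd_range[of K u 2, OF _ this] u0 K2 obtain c where
        "0 \<le> c" "c < 2" "u = K*c" by auto
      then have "u = 0 \<or> u = K" by (cases "c = 0") auto
      then show ?thesis using u by auto
    next
      assume "K dvd u + 1"
      from dvd_range[of K "u+1" 3, OF _ this] u0 K2 obtain c where
        "0 \<le> c" "c < 3" "u + 1 = K*c" by auto
      then have "c = 1 \<or> c = 2" using u0 K2 by (cases "c = 0") auto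
      then have "u + 1 = K \<or> u + 1 = 2*K" using \<open>u + 1 = K*c\<close> by auto
      then show ?thesis using u by auto
    qed
  next
    fix t assume t: "t \<in> {1, 2*K - 1, 2*K + 1, 4*K - 1}"
    have "4*K dvd t^2 - 1"
    proof -
      consider "t = 1" | "t = 2*K - 1" | "t = 2*K + 1" | "t = 4*K - 1" using t by blast
      then show ?thesis
      proof cases
        case 1 then show ?thesis by simp
      next
        case 2
        have "t^2 - 1 = (4*K) * (K - 1)" unfolding 2 by (simp add: power2_eq_square algebra_simps)
        then show ?thesis by simp
      next
        case 3
        have "t^2 - 1 = (4*K) * (K + 1)" unfolding 3 by (simp add: power2_eq_square algebra_simps)
        then show ?thesis by simp
      next
        case 4
        have "t^2 - 1 = (4*K) * (4*K - 2)" unfolding 4 by (simp add: power2_eq_square algebra_simps)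
        then show ?thesis by simp
      qed
    qed
    then show "t \<in> Sq (4*K)" using t K2 unfolding Sq_def by auto
  qed
  moreover have "card {1, 2*K - 1, 2*K + 1, 4*K - 1} = 4" using K2 by simp
  ultimately show ?thesis unfolding K_def by simp
qed

lemma Sq_4: "card (Sq 4) = 2"
proof -
  have "Sq 4 = {1, 3}"
  proof (intro set_eqI iffI)
    fix t assume "t \<in> Sq 4"
    then have "0 \<le> t" "t < 4" "(4::int) dvd t^2 - 1" unfolding Sq_def by auto
    then have "t = 0 \<or> t = 1 \<or> t = 2 \<or> t = 3" "(4::int) dvd t^2 - 1" by auto
    then show "t \<in> {1,3}" by auto
  next
    fix t assume "t \<in> {1::int, 3}" then show "t \<in> Sq 4" unfolding Sq_def by auto
  qed
  then show ?thesis by simp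
qed


lemma prime_factors_prime_pow:
  fixes p :: nat assumes "prime p" "0 < e"
  shows "prime_factors (p^e) = {p}"
proof -
  have "p^e \<noteq> 0" using assms by (simp add: prime_gt_0_nat)
  then have "prime_factors (p^e) = {q. prime q \<and> q dvd p^e}" by (rule prime_factors_dvd)
  also have "\<dots> = {p}"
  proof (intro set_eqI iffI)
    fix q assume "q \<in> {q. prime q \<and> q dvd p^e}"
    then have "prime q" "q dvd p" using prime_dvd_power by auto
    then show "q \<in> {p}" using assms(1) by (simp add: primes_dvd_imp_eq)
  next
    fix q assume "q \<in> {p}" then show "q \<in> {q. prime q \<and> q dvd p^e}"
      using assms by (simp add: dvd_power)
  qed
  finally show ?thesis .
qed

lemma Sq_1: "card (Sq 1) = 1"
proof -
  have "Sq 1 = {0}" unfolding Sq_def by auto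
  then show ?thesis by simp
qed

lemma Sq_odd:
  fixes m :: nat
  assumes "odd m" "0 < m"
  shows "card (Sq (int m)) = 2 ^ card (prime_factors m)"
  using assms
proof (induction m rule: less_induct)
  case (less m)
  show ?case
  proof (cases "m = 1")
    case True
    then show ?thesis using Sq_1 by simp
  next
    case False
    then obtain p where p: "prime p" "p dvd m" using prime_factor_nat by blast
    define e where "e = multiplicity p m"
    define m' where "m' = m div p^e"
    have m'1: "\<not> p dvd m'" unfolding m'_def e_def by (rule multiplicity_decompose) (use p less.prems not_prime_unit in auto)
    have "p^e dvd m" unfolding e_def by (rule multiplicity_dvd)
    then have m'2: "m = p^e * m'" unfolding m'_def by simp
    note m' = m'2 m'1
    have e0: "0 < e" unfolding e_def using p less.prems
      by (simp add: prime_multiplicity_gt_zero_iff)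
    have p2: "2 \<le> p" using p prime_ge_2_nat by blast
    have "p^1 \<le> p^e" using e0 p2 by (intro power_increasing) auto
    then have pe2: "2 \<le> p^e" using p2 by simp
    have m'0: "0 < m'" using m' less.prems by (cases "m' = 0") auto
    have "2*m' \<le> p^e*m'" using pe2 by simp
    then have "m' < m" using m' m'0 by linarith
    have oddm': "odd m'" using m' less.prems by auto
    have oddp: "odd p"
    proof
      assume "even p" then have "2 dvd m" using p(2) dvd_trans by blast
      then show False using less.prems(1) by simp
    qed
    have IH: "card (Sq (int m')) = 2 ^ card (prime_factors m')"
      using less.IH[OF \<open>m' < m\<close> oddm' m'0] .
    have cop: "coprime (p^e) m'"
      using m'(2) p(1) by (simp add: prime_imp_coprime)
    have "card (Sq (int m)) = card (Sq (int p ^ e * int m'))" using m' by simp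
    also have "\<dots> = card (Sq (int p ^ e)) * card (Sq (int m'))"
      by (rule Sq_mult) (use p m'0 cop in \<open>auto simp: prime_gt_0_nat\<close>)
    also have "card (Sq (int p ^ e)) = 2"
      by (rule Sq_odd_prime_power) (use p oddp e0 in auto)
    finally have c1: "card (Sq (int m)) = 2 * card (Sq (int m'))" .
    have pf: "prime_factors m = insert p (prime_factors m')"
    proof -
      have "prime_factors m = prime_factors (p^e) \<union> prime_factors m'"
        using m' m'0 p by (simp add: prime_factors_product prime_gt_0_nat)
      then show ?thesis using prime_factors_prime_pow[OF p(1) e0] by simp
    qed
    have "p \<notin> prime_factors m'" using m'(2) by (meson in_prime_factors_imp_dvd)
    then have "card (prime_factors m) = Suc (card (prime_factors m'))" unfolding pf by simp
    then show ?thesis using IH c1 by simp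
  qed
qed


definition T1 :: "int \<Rightarrow> int set" where
  "T1 D = {t. 0 \<le> t \<and> t < 2*D \<and> 4*D dvd t^2 - 1}"

lemma T1_finite[simp]: "finite (T1 D)"
  by (rule finite_subset[of _ "{0..<2*D}"]) (auto simp: T1_def)

lemma Sq_T1:
  assumes D: "0 < D"
  shows "card (Sq (4*D)) = 2 * card (T1 D)"
proof -
  let ?f = "\<lambda>t. t + 2*D"
  have eq: "Sq (4*D) = T1 D \<union> ?f ` T1 D"
  proof (intro set_eqI iffI)
    fix t assume t: "t \<in> Sq (4*D)"
    then have t0: "0 \<le> t" "t < 4*D" and d: "4*D dvd t^2 - 1" unfolding Sq_def by auto
    show "t \<in> T1 D \<union> ?f ` T1 D"
    proof (cases "t < 2*D")
      case True then show ?thesis using t0 d unfolding T1_def by auto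
    next
      case False
      have e: "(t - 2*D)^2 - 1 = (t^2 - 1) + 4*D*(D - t)" by (simp add: power2_eq_square algebra_simps)
      have "4*D dvd (t^2 - 1) + 4*D*(D - t)" using d by (rule dvd_add) simp
      then have "4*D dvd (t - 2*D)^2 - 1" unfolding e .
      then have "t - 2*D \<in> T1 D" using False t0 unfolding T1_def by auto
      moreover have "t = ?f (t - 2*D)" by simp
      ultimately show ?thesis by blast
    qed
  next
    fix t assume "t \<in> T1 D \<union> ?f ` T1 D"
    then show "t \<in> Sq (4*D)"
    proof
      assume "t \<in> T1 D" then show ?thesis unfolding T1_def Sq_def by auto
    next
      assume "t \<in> ?f ` T1 D"
      then obtain u where u: "u \<in> T1 D" "t = u + 2*D" by blast
      have e: "t^2 - 1 = (u^2 - 1) + 4*D*(u + D)" unfolding u(2) by (simp add: power2_eq_square algebra_simps)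
      have "4*D dvd u^2 - 1" using u unfolding T1_def by simp
      then have "4*D dvd (u^2 - 1) + 4*D*(u + D)" by (rule dvd_add) simp
      then have "4*D dvd t^2 - 1" unfolding e .
      then show ?thesis using u unfolding T1_def Sq_def by auto
    qed
  qed
  have disj: "T1 D \<inter> ?f ` T1 D = {}" unfolding T1_def by auto
  have "card (Sq (4*D)) = card (T1 D) + card (?f ` T1 D)"
    unfolding eq by (rule card_Un_disjoint) (use disj in auto)
  also have "card (?f ` T1 D) = card (T1 D)" by (rule card_image) (simp add: inj_on_def)
  finally show ?thesis by simp
qed

lemma card_T1:
  fixes d :: nat
  assumes d: "0 < d"
  shows "card (T1 (int d)) = 2 ^ card (prime_factors d)"
proof -
  define k where "k = multiplicity 2 d"
  define m where "m = d div 2^k"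
  have m1: "\<not> 2 dvd m" unfolding m_def k_def
    by (rule multiplicity_decompose) (use d in auto)
  have "2^k dvd d" unfolding k_def by (rule multiplicity_dvd)
  then have dm: "d = 2^k * m" unfolding m_def by simp
  have m0: "0 < m" using dm d by (cases "m = 0") auto
  have c2: "coprime 2 m" using m1 two_is_prime_nat prime_imp_coprime by blast
  have cp: "coprime ((2::nat)^n) m" for n using c2 by simp
  have "coprime ((2::nat)^2) m" by (rule cp)
  then have "coprime (4::nat) m" by simp
  then have cop: "coprime (4 * 2^k) m" using cp[of k] by simp
  have e4: "4 * int d = int (4 * 2^k) * int m" using dm by simp
  have cop': "coprime (int (4*2^k)) (int m)" using cop by (simp only: coprime_int_iff)
  have "card (Sq (int (4*2^k) * int m)) = card (Sq (int (4*2^k))) * card (Sq (int m))"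
    by (rule Sq_mult[OF _ _ cop']) (use m0 in simp_all)
  then have "card (Sq (4 * int d)) = card (Sq (int (4 * 2^k))) * card (Sq (int m))"
    unfolding e4 .
  also have "card (Sq (int m)) = 2 ^ card (prime_factors m)"
    by (rule Sq_odd) (use m1 m0 in auto)
  finally have c: "card (Sq (4 * int d)) = card (Sq (int (4 * 2^k))) * 2 ^ card (prime_factors m)" .
  have "card (Sq (4 * int d)) = 2 * 2 ^ card (prime_factors d)"
  proof (cases "k = 0")
    case True
    then have "d = m" using dm by simp
    moreover have "card (Sq (int (4 * 2^k))) = 2" using True Sq_4 by simp
    ultimately show ?thesis using c by simp
  next
    case False
    have "card (Sq (int (4 * 2^k))) = 4" using Sq_two_power[of k] False by simp
    moreover have "prime_factors d = insert 2 (prime_factors m)"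
    proof -
      have "prime_factors d = prime_factors (2^k) \<union> prime_factors m"
        using dm m0 by (simp add: prime_factors_product)
      then show ?thesis using prime_factors_prime_pow[of 2 k] False by simp
    qed
    moreover have "2 \<notin> prime_factors m" using m1 by (meson in_prime_factors_imp_dvd)
    ultimately show ?thesis using c by simp
  qed
  then show ?thesis using Sq_T1[of "int d"] d by simp
qed


definition T2 :: "int \<Rightarrow> int set" where
  "T2 D = {t. 0 \<le> t \<and> t < 2*D \<and> 4*D dvd t^2 - D - 1}"

lemma T2_finite[simp]: "finite (T2 D)"
  by (rule finite_subset[of _ "{0..<2*D}"]) (auto simp: T2_def)

lemma sq_mod2D:
  fixes D x c :: int
  shows "4*D dvd (x mod (2*D))^2 - c \<longleftrightarrow> 4*D dvd x^2 - c"
proof -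
  define q where "q = x div (2*D)"
  have m: "x mod (2*D) = x - 2*D*q" unfolding q_def by (simp add: minus_div_mult_eq_mod [symmetric] algebra_simps)
  have e: "(x mod (2*D))^2 - c = (x^2 - c) + 4*D*(D*q*q - q*x)"
    unfolding m by (simp add: power2_eq_square algebra_simps)
  show ?thesis unfolding e by (simp add: dvd_add_left_iff)
qed

lemma dvd_small_abs: fixes M z :: int assumes "M dvd z" "\<bar>z\<bar> < M" shows "z = 0"
proof (rule ccontr)
  assume "z \<noteq> 0"
  from dvd_imp_le_int[OF this assms(1)] assms(2) show False by simp
qed

lemma mod_inj_2D:
  fixes D t t' :: int
  assumes "2*D dvd t - t'" "0 \<le> t" "t < 2*D" "0 \<le> t'" "t' < 2*D"
  shows "t = t'"
proof -
  have "t - t' = 0" by (rule dvd_small_abs[OF assms(1)]) (use assms in simp)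
  then show ?thesis by simp
qed

lemma odd_of_sq: fixes t :: int assumes "2 dvd t^2 - 1" shows "odd t"
proof -
  have aux: "2 dvd (s::int) - 1 \<Longrightarrow> odd s" for s by presburger
  have "odd (t^2)" using assms by (rule aux)
  then show ?thesis by simp
qed

lemma card_eq_maps:
  assumes "finite A" "finite B" "f ` A \<subseteq> B" "inj_on f A" "g ` B \<subseteq> A" "inj_on g B"
  shows "card A = card B"
  using card_inj_on_le[OF assms(4,3,2)] card_inj_on_le[OF assms(6,5,1)] by simp

lemma T2_3:
  fixes D :: int
  assumes D: "0 < D" and D3: "D mod 4 = 3"
  shows "card (T2 D) = card (T1 D)"
proof -
  let ?f = "\<lambda>t. (t + D) mod (2*D)"
  have inj: "inj_on ?f A" if "A \<subseteq> {0..<2*D}" for A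
  proof
    fix x y assume "x \<in> A" "y \<in> A" "?f x = ?f y"
    then have "2*D dvd (x + D) - (y + D)" "0 \<le> x" "x < 2*D" "0 \<le> y" "y < 2*D"
      using that by (auto simp: mod_eq_dvd_iff)
    then show "x = y" using mod_inj_2D[of D x y] by simp
  qed
  have m1: "?f ` T1 D \<subseteq> T2 D"
  proof
    fix s assume "s \<in> ?f ` T1 D"
    then obtain t where t: "t \<in> T1 D" "s = ?f t" by blast
    have d: "4*D dvd t^2 - 1" using t unfolding T1_def by simp
    have "2 dvd 4*D" by simp
    then have "2 dvd t^2 - 1" using d by (rule dvd_trans)
    then have "odd t" by (rule odd_of_sq)
    then have "4 dvd 2*t + D - 1" using D3 by presburger
    then have "4*D dvd D*(2*t + D - 1)" by (simp add: mult.commute mult_dvd_mono)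
    then have "4*D dvd (t^2 - 1) + D*(2*t + D - 1)" using d by (intro dvd_add)
    moreover have "(t^2 - 1) + D*(2*t + D - 1) = (t + D)^2 - D - 1"
      by (simp add: power2_eq_square algebra_simps)
    ultimately have "4*D dvd (t + D)^2 - (D + 1)" by (simp add: algebra_simps)
    then have "4*D dvd s^2 - (D + 1)" unfolding t(2) by (simp only: sq_mod2D)
    then show "s \<in> T2 D" unfolding t(2) T2_def using D by (simp add: algebra_simps)
  qed
  have m2: "?f ` T2 D \<subseteq> T1 D"
  proof
    fix s assume "s \<in> ?f ` T2 D"
    then obtain t where t: "t \<in> T2 D" "s = ?f t" by blast
    have d: "4*D dvd t^2 - D - 1" using t unfolding T2_def by simp
    have "2 dvd 4*D" by simp
    then have "2 dvd t^2 - D - 1" using d by (rule dvd_trans)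
    moreover have "2 dvd (s::int) - D - 1 \<Longrightarrow> D mod 4 = 3 \<Longrightarrow> 2 dvd s" for s by presburger
    ultimately have "2 dvd t^2" using D3 by blast
    then have "even t" by simp
    then have "4 dvd 2*t + D + 1" using D3 by presburger
    then have "4*D dvd D*(2*t + D + 1)" by (simp add: mult.commute mult_dvd_mono)
    then have "4*D dvd (t^2 - D - 1) + D*(2*t + D + 1)" using d by (intro dvd_add)
    moreover have "(t^2 - D - 1) + D*(2*t + D + 1) = (t + D)^2 - 1"
      by (simp add: power2_eq_square algebra_simps)
    ultimately have "4*D dvd (t + D)^2 - 1" by simp
    then have "4*D dvd s^2 - 1" unfolding t(2) by (simp only: sq_mod2D)
    then show "s \<in> T1 D" unfolding t(2) T1_def using D by simp
  qed
  have i1: "inj_on ?f (T1 D)" by (rule inj) (auto simp: T1_def)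
  have i2: "inj_on ?f (T2 D)" by (rule inj) (auto simp: T2_def)
  have "card (T1 D) = card (T2 D)"
    by (rule card_eq_maps[OF _ _ m1 i1 m2 i2]) simp_all
  then show ?thesis by simp
qed


lemma inj_mult:
  fixes D c c' :: int
  assumes cc: "2*D dvd c*c' - 1" and A: "A \<subseteq> {0..<2*D}"
  shows "inj_on (\<lambda>t. (t*c) mod (2*D)) A"
proof
  fix x y assume x: "x \<in> A" and y: "y \<in> A" and e: "(x*c) mod (2*D) = (y*c) mod (2*D)"
  have "2*D dvd x*c - y*c" using e by (simp add: mod_eq_dvd_iff)
  then have "2*D dvd (x*c - y*c)*c'" by (rule dvd_mult2)
  moreover have "2*D dvd (x - y)*(c*c' - 1)" using cc by (rule dvd_mult)
  ultimately have "2*D dvd (x*c - y*c)*c' - (x - y)*(c*c' - 1)" by (rule dvd_diff)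
  moreover have "(x*c - y*c)*c' - (x - y)*(c*c' - 1) = x - y" by (simp add: algebra_simps)
  ultimately have dd: "2*D dvd x - y" by simp
  have "x \<in> {0..<2*D}" "y \<in> {0..<2*D}" using x y A by auto
  then show "x = y" using mod_inj_2D[OF dd] by simp
qed

lemma T2_8:
  fixes D :: int
  assumes D: "0 < D" and D8: "8 dvd D"
  shows "card (T2 D) = card (T1 D)"
proof -
  obtain j where j: "D = 8*j" using D8 by blast
  define w where "w = 1 + 4*j + 8*j*j"
  define v where "v = w*(1 - D)"
  define K where "K = j + 2*j*j + 2*j*j*j"
  have W1: "w^2 - D - 1 = 4*D*K" unfolding w_def K_def j by (simp add: power2_eq_square algebra_simps)
  have "w*v - 1 = 2*D*(2*K*(1 - D) - 4*j)"
  proof -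
    have "w*v - 1 = (w^2 - D - 1)*(1 - D) - D*D" unfolding v_def by (simp add: power2_eq_square algebra_simps)
    also have "\<dots> = 2*D*(2*K*(1 - D) - 4*j)" unfolding W1 by (simp add: j algebra_simps)
    finally show ?thesis .
  qed
  then have W2: "2*D dvd w*v - 1" by simp
  have W2': "2*D dvd v*w - 1" using W2 by (simp add: mult.commute)
  let ?f = "\<lambda>t. (t*w) mod (2*D)"
  let ?g = "\<lambda>t. (t*v) mod (2*D)"
  have m1: "?f ` T1 D \<subseteq> T2 D"
  proof
    fix s assume "s \<in> ?f ` T1 D"
    then obtain t where t: "t \<in> T1 D" "s = ?f t" by blast
    obtain k where k: "t^2 - 1 = 4*D*k" using t unfolding T1_def by (auto elim!: dvdE)
    have "(t*w)^2 - (D + 1) = (t^2 - 1)*w^2 + (w^2 - D - 1)" by (simp add: power2_eq_square algebra_simps)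
    also have "\<dots> = 4*D*(k*w^2 + K)" unfolding k W1 by (simp add: algebra_simps)
    finally have "4*D dvd (t*w)^2 - (D + 1)" by simp
    then have "4*D dvd s^2 - (D + 1)" unfolding t(2) by (simp only: sq_mod2D)
    then show "s \<in> T2 D" unfolding t(2) T2_def using D by (simp add: algebra_simps)
  qed
  have m2: "?g ` T2 D \<subseteq> T1 D"
  proof
    fix s assume "s \<in> ?g ` T2 D"
    then obtain t where t: "t \<in> T2 D" "s = ?g t" by blast
    obtain k where k: "t^2 - D - 1 = 4*D*k" using t unfolding T2_def by (auto elim!: dvdE)
    have "(t*v)^2 - 1 = (t^2 - D - 1)*v^2 + (D + 1)*(1 - D)^2*(w^2 - D - 1) + (D*D*(D*D - 2))"
      unfolding v_def by (simp add: power2_eq_square algebra_simps)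
    also have "\<dots> = 4*D*(k*v^2 + (D + 1)*(1 - D)^2*K + 2*j*(D*D - 2))"
      unfolding k W1 by (simp add: j algebra_simps)
    finally have "4*D dvd (t*v)^2 - 1" by simp
    then have "4*D dvd s^2 - 1" unfolding t(2) by (simp only: sq_mod2D)
    then show "s \<in> T1 D" unfolding t(2) T1_def using D by simp
  qed
  have i1: "inj_on ?f (T1 D)" by (rule inj_mult[OF W2]) (auto simp: T1_def)
  have i2: "inj_on ?g (T2 D)" by (rule inj_mult[OF W2']) (auto simp: T2_def)
  have "card (T1 D) = card (T2 D)"
    by (rule card_eq_maps[OF _ _ m1 i1 m2 i2]) simp_all
  then show ?thesis by simp
qed

lemma T2_4:
  fixes D :: int
  assumes D: "0 < D" and D4: "D mod 8 = 4"
  shows "T2 D = {}"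
proof (rule ccontr)
  assume "T2 D \<noteq> {}"
  then obtain t where t: "t \<in> T2 D" by blast
  have d: "4*D dvd t^2 - D - 1" using t unfolding T2_def by simp
  have "8 dvd 4*D" using D4 by presburger
  then have "8 dvd t^2 - D - 1" using d by (rule dvd_trans)
  moreover have "8 dvd (s::int) - D - 1 \<Longrightarrow> D mod 8 = 4 \<Longrightarrow> 8 dvd s - 5" for s by presburger
  ultimately have h: "8 dvd t^2 - 5" using D4 by blast
  define q where "q = t div 8"
  define r where "r = t mod 8"
  have tr: "t = 8*q + r" unfolding q_def r_def by simp
  have r: "0 \<le> r" "r < 8" unfolding r_def by simp_all
  have "t^2 - 5 = 8*(8*q*q + 2*q*r) + (r*r - 5)" unfolding tr by (simp add: power2_eq_square algebra_simps)
  then have "8 dvd r*r - 5" using h by (metis dvd_add_right_iff dvd_triv_left)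
  moreover have "r = 0 \<or> r = 1 \<or> r = 2 \<or> r = 3 \<or> r = 4 \<or> r = 5 \<or> r = 6 \<or> r = 7" using r by auto
  ultimately show False by auto
qed


definition enc :: "int \<Rightarrow> int \<times> int \<Rightarrow> rat \<times> rat" where
  "enc D x = (of_int (fst x) / 2, of_int (snd x) / of_int (2*D))"
definition G :: "int \<Rightarrow> (int \<times> int) set" where
  "G D = {0..<2} \<times> {0..<2*D}"
definition addG :: "int \<Rightarrow> int \<times> int \<Rightarrow> int \<times> int \<Rightarrow> int \<times> int" where
  "addG D x y = ((fst x + fst y) mod 2, (snd x + snd y) mod (2*D))"
definition Qf :: "int \<Rightarrow> int \<times> int \<Rightarrow> int" where
  "Qf D x = D * (fst x)^2 - (snd x)^2"

lemma G_finite[simp]: "finite (G D)" unfolding G_def by simp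

lemma enc_eq_iff: assumes "0 < D" shows "enc D x = enc D y \<longleftrightarrow> x = y"
  using assms unfolding enc_def by (cases x; cases y) (auto simp: divide_cancel_right)

lemma inj_enc: "0 < D \<Longrightarrow> inj (enc D)"
  by (simp add: inj_def enc_eq_iff)

lemma frac_div:
  assumes M: "0 < M"
  shows "frac (of_int k / of_int M :: rat) = of_int (k mod M) / of_int M"
proof -
  have k: "(of_int k :: rat) = of_int M * of_int (k div M) + of_int (k mod M)"
    by (metis mult_div_mod_eq of_int_add of_int_mult)
  have "(of_int k / of_int M :: rat) = of_int (k div M) + of_int (k mod M) / of_int M"
    using M by (subst k) (simp add: field_simps)
  then have "(of_int k / of_int M :: rat) - of_int (k mod M) / of_int M \<in> \<int>" by simp
  moreover have "0 \<le> (of_int (k mod M) / of_int M :: rat)" using M by simp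
  moreover have "(of_int (k mod M) / of_int M :: rat) < 1" using M by simp
  ultimately show ?thesis by (simp add: frac_unique_iff)
qed

lemma frac_vec_enc: assumes "0 < D"
  shows "frac_vec (enc D x) = enc D (fst x mod 2, snd x mod (2*D))"
  using assms unfolding frac_vec_def enc_def
  by (simp add: frac_div[of 2, simplified] frac_div[of "2*D", simplified])

lemma enc_mod: assumes "0 < D" "x \<in> G D"
  shows "(fst x mod 2, snd x mod (2*D)) = x"
  using assms unfolding G_def by (cases x) auto

lemma dual_iff:
  assumes D: "0 < D"
  shows "x \<in> dual_lattice 2 (-2*D) \<longleftrightarrow> (\<exists>y. x = enc D y)"
proof
  assume x: "x \<in> dual_lattice 2 (-2*D)"
  have h: "2 * fst x * of_int m - 2 * of_int D * snd x * of_int n \<in> \<int>" for m n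
    using x unfolding dual_lattice_def diag_form_def by simp
  from h[of 1 0] have "2 * fst x \<in> \<int>" by simp
  then obtain a where a: "2 * fst x = of_int a" by (auto elim: Ints_cases)
  from h[of 0 1] have "2 * of_int D * snd x \<in> \<int>" by simp
  then obtain b where b: "2 * of_int D * snd x = of_int b" by (auto elim: Ints_cases)
  have "fst x = of_int a / 2" using a by simp
  moreover have "snd x = of_int b / of_int (2*D)" using b D by (simp add: field_simps)
  ultimately have "x = enc D (a, b)" unfolding enc_def by (cases x) simp
  then show "\<exists>y. x = enc D y" by blast
next
  assume "\<exists>y. x = enc D y"
  then obtain a b where x: "x = enc D (a, b)" by auto
  have "diag_form 2 (-2*D) x (of_int m, of_int n) = of_int (a*m - b*n)" for m n
    using D unfolding x enc_def diag_form_def by (simp add: field_simps)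
  then show "x \<in> dual_lattice 2 (-2*D)" unfolding dual_lattice_def by simp
qed

lemma disc_eq:
  assumes D: "0 < D"
  shows "disc_group 2 (-2*D) = enc D ` G D"
proof (intro set_eqI iffI)
  fix x assume "x \<in> disc_group 2 (-2*D)"
  then obtain z where z: "z \<in> dual_lattice 2 (-2*D)" "x = frac_vec z"
    unfolding disc_group_def by blast
  then obtain y where y: "z = enc D y" using dual_iff[OF D] by blast
  have "x = enc D (fst y mod 2, snd y mod (2*D))" using z y frac_vec_enc[OF D] by simp
  moreover have "(fst y mod 2, snd y mod (2*D)) \<in> G D" using D unfolding G_def by simp
  ultimately show "x \<in> enc D ` G D" by blast
next
  fix x assume "x \<in> enc D ` G D"
  then obtain y where y: "y \<in> G D" "x = enc D y" by blast
  have "x \<in> dual_lattice 2 (-2*D)" using y dual_iff[OF D] by blast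
  moreover have "frac_vec x = x" using y frac_vec_enc[OF D] enc_mod[OF D] by simp
  ultimately show "x \<in> disc_group 2 (-2*D)" unfolding disc_group_def by force
qed

lemma add_enc:
  assumes D: "0 < D"
  shows "disc_add (enc D x) (enc D y) = enc D (addG D x y)"
proof -
  have "disc_add (enc D x) (enc D y) = frac_vec (enc D (fst x + fst y, snd x + snd y))"
    unfolding disc_add_def enc_def by (simp add: add_divide_distrib)
  then show ?thesis using frac_vec_enc[OF D] unfolding addG_def by simp
qed

lemma diag_enc:
  assumes D: "0 < D"
  shows "diag_form 2 (-2*D) (enc D x) (enc D x) = of_int (Qf D x) / of_int (2*D)"
  using D unfolding diag_form_def enc_def Qf_def
  by (simp add: field_simps power2_eq_square)

lemma cong_enc:
  assumes D: "0 < D"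
  shows "cong_mod2 (of_int A / of_int (2*D)) (of_int B / of_int (2*D)) \<longleftrightarrow> 4*D dvd A - B"
proof -
  have e: "(of_int A / of_int (2*D) - of_int B / of_int (2*D)) / 2 = (of_int (A - B) / of_int (4*D) :: rat)"
    using D by (simp add: field_simps)
  show ?thesis unfolding cong_mod2_def e of_int_div_of_int_in_Ints_iff using D by simp
qed


definition L :: "int \<Rightarrow> int \<times> int \<Rightarrow> int \<times> int \<Rightarrow> int \<times> int \<Rightarrow> int \<times> int" where
  "L D u v x = ((fst x * fst u + snd x * fst v) mod 2, (fst x * snd u + snd x * snd v) mod (2*D))"

lemma mod_eqI: fixes A B M :: int shows "M dvd A - B \<Longrightarrow> A mod M = B mod M"
  by (simp add: mod_eq_dvd_iff)

lemma mod_expand: fixes x M :: int shows "x mod M = x - M * (x div M)"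
  by (simp add: minus_div_mult_eq_mod [symmetric] algebra_simps)

lemma L_in_G: "0 < D \<Longrightarrow> L D u v x \<in> G D"
  unfolding L_def G_def by simp

lemma L_G_id: "0 < D \<Longrightarrow> u \<in> G D \<Longrightarrow> L D u v (1, 0) = u"
  unfolding L_def G_def by (cases u) auto

lemma L_G_id2: "0 < D \<Longrightarrow> v \<in> G D \<Longrightarrow> L D u v (0, 1) = v"
  unfolding L_def G_def by (cases v) auto

lemma L_zero: "L D u v (0, 0) = (0, 0)"
  unfolding L_def by simp

lemma L_succ:
  shows "addG D (L D u v x) v = L D u v (fst x, snd x + 1)"
  unfolding addG_def L_def
  by (simp add: mod_add_left_eq mod_add_right_eq algebra_simps)

lemma L_add:
  assumes D: "0 < D" and u2: "2*D dvd 2 * snd u"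
  shows "L D u v (addG D a b) = addG D (L D u v a) (L D u v b)"
proof -
  obtain a1 a2 where a: "a = (a1, a2)" by (cases a)
  obtain b1 b2 where b: "b = (b1, b2)" by (cases b)
  obtain u1 u2 where u: "u = (u1, u2)" by (cases u)
  obtain v1 v2 where v: "v = (v1, v2)" by (cases v)
  define q1 where "q1 = (a1 + b1) div 2"
  define q2 where "q2 = (a2 + b2) div (2*D)"
  have m1: "(a1 + b1) mod 2 = a1 + b1 - 2 * q1" unfolding q1_def by (rule mod_expand)
  have m2: "(a2 + b2) mod (2*D) = a2 + b2 - 2*D * q2" unfolding q2_def by (rule mod_expand)
  obtain w where w: "2 * u2 = 2*D*w" using u2 u by auto
  have c1: "(((a1 + b1) mod 2) * u1 + ((a2 + b2) mod (2*D)) * v1) mod 2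
      = ((a1 * u1 + a2 * v1) + (b1 * u1 + b2 * v1)) mod 2"
  proof (rule mod_eqI)
    have "((a1 + b1) mod 2) * u1 + ((a2 + b2) mod (2*D)) * v1 - ((a1 * u1 + a2 * v1) + (b1 * u1 + b2 * v1))
       = 2 * (- q1 * u1 - D * q2 * v1)" unfolding m1 m2 by (simp add: algebra_simps)
    then show "2 dvd ((a1 + b1) mod 2) * u1 + ((a2 + b2) mod (2*D)) * v1 - ((a1 * u1 + a2 * v1) + (b1 * u1 + b2 * v1))"
      by simp
  qed
  have c2: "(((a1 + b1) mod 2) * u2 + ((a2 + b2) mod (2*D)) * v2) mod (2*D)
      = ((a1 * u2 + a2 * v2) + (b1 * u2 + b2 * v2)) mod (2*D)"
  proof (rule mod_eqI)
    have "((a1 + b1) mod 2) * u2 + ((a2 + b2) mod (2*D)) * v2 - ((a1 * u2 + a2 * v2) + (b1 * u2 + b2 * v2))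
       = - q1 * (2 * u2) - 2 * D * q2 * v2" unfolding m1 m2 by (simp add: algebra_simps)
    also have "\<dots> = 2 * D * (- q1 * w - q2 * v2)" unfolding w by (simp add: algebra_simps)
    finally show "2*D dvd ((a1 + b1) mod 2) * u2 + ((a2 + b2) mod (2*D)) * v2 - ((a1 * u2 + a2 * v2) + (b1 * u2 + b2 * v2))"
      by simp
  qed
  show ?thesis unfolding a b u v L_def addG_def using c1 c2
    by (simp add: mod_add_eq)
qed

lemma Qf_mod:
  fixes D a b :: int
  shows "4*D dvd Qf D (a mod 2, b mod (2*D)) - Qf D (a, b)"
proof -
  define i where "i = a div 2"
  define j where "j = b div (2*D)"
  have m1: "a mod 2 = a - 2*i" unfolding i_def by (rule mod_expand)
  have m2: "b mod (2*D) = b - 2*D*j" unfolding j_def by (rule mod_expand)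
  have "Qf D (a mod 2, b mod (2*D)) - Qf D (a, b) = 4*D*(i*i - a*i + b*j - D*j*j)"
    unfolding Qf_def m1 m2 by (simp add: power2_eq_square algebra_simps)
  then show ?thesis by simp
qed

lemma Qf_L:
  fixes D :: int
  assumes c1: "4*D dvd Qf D u - D" and c2: "4*D dvd Qf D v + 1"
    and c3: "2*D dvd D * fst u * fst v - snd u * snd v"
  shows "4*D dvd Qf D (L D u v x) - Qf D x"
proof -
  obtain a1 a2 where a: "x = (a1, a2)" by (cases x)
  obtain u1 u2 where u: "u = (u1, u2)" by (cases u)
  obtain v1 v2 where v: "v = (v1, v2)" by (cases v)
  have h1: "4*D dvd Qf D (L D u v x) - Qf D (a1*u1 + a2*v1, a1*u2 + a2*v2)"
    unfolding a u v L_def using Qf_mod by simp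
  obtain k3 where k3: "D * u1 * v1 - u2 * v2 = 2*D*k3" using c3 u v by (auto elim!: dvdE)
  have e: "Qf D (a1*u1 + a2*v1, a1*u2 + a2*v2) - Qf D x
     = a1^2 * (Qf D u - D) + a2^2 * (Qf D v + 1) + 4*D*(a1*a2*k3)"
  proof -
    have "Qf D (a1*u1 + a2*v1, a1*u2 + a2*v2) - Qf D x
       = a1^2 * (Qf D u - D) + a2^2 * (Qf D v + 1) + 2*a1*a2*(D * u1 * v1 - u2 * v2)"
      unfolding a u v Qf_def by (simp add: power2_eq_square algebra_simps)
    then show ?thesis unfolding k3 by (simp add: algebra_simps)
  qed
  have "4*D dvd a1^2 * (Qf D u - D) + a2^2 * (Qf D v + 1) + 4*D*(a1*a2*k3)"
  proof -
    have "4*D dvd a1^2 * (Qf D u - D)" using c1 by (rule dvd_mult)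
    moreover have "4*D dvd a2^2 * (Qf D v + 1)" using c2 by (rule dvd_mult)
    moreover have "4*D dvd 4*D*(a1*a2*k3)" by simp
    ultimately show ?thesis by (intro dvd_add)
  qed
  then have "4*D dvd Qf D (a1*u1 + a2*v1, a1*u2 + a2*v2) - Qf D x" using e by simp
  from dvd_add[OF h1 this] show ?thesis by simp
qed


definition Fmap :: "int \<Rightarrow> int \<times> int \<Rightarrow> int \<times> int \<Rightarrow> rat \<times> rat \<Rightarrow> rat \<times> rat" where
  "Fmap D u v y = (if y \<in> enc D ` G D then enc D (L D u v (inv (enc D) y)) else y)"

definition Phi :: "int \<Rightarrow> (rat \<times> rat \<Rightarrow> rat \<times> rat) \<Rightarrow> (int \<times> int) \<times> (int \<times> int)" where
  "Phi D f = (inv (enc D) (f (enc D (1,0))), inv (enc D) (f (enc D (0,1))))"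

definition conds :: "int \<Rightarrow> int \<times> int \<Rightarrow> int \<times> int \<Rightarrow> bool" where
  "conds D u v \<longleftrightarrow> 2*D dvd 2 * snd u \<and> 4*D dvd Qf D u - D \<and> 4*D dvd Qf D v + 1
      \<and> 2*D dvd D * fst u * fst v - snd u * snd v"

definition PP :: "int \<Rightarrow> ((int \<times> int) \<times> (int \<times> int)) set" where
  "PP D = {(u,v). u \<in> G D \<and> v \<in> G D \<and> conds D u v \<and> inj_on (L D u v) (G D)}"

lemma inv_enc[simp]: "0 < D \<Longrightarrow> inv (enc D) (enc D x) = x"
  using inj_enc by (simp add: inv_f_f)

lemma O_unf: assumes "0 < D" "f \<in> O_disc 2 (-2*D)"
  shows "bij_betw f (enc D ` G D) (enc D ` G D) \<and>
    (\<forall>x\<in>enc D ` G D. \<forall>y\<in>enc D ` G D. f (disc_add x y) = disc_add (f x) (f y)) \<and>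
    (\<forall>x\<in>enc D ` G D. cong_mod2 (diag_form 2 (-2*D) (f x) (f x)) (diag_form 2 (-2*D) x x)) \<and>
    (\<forall>x. x \<notin> enc D ` G D \<longrightarrow> f x = x)"
  using assms(2) unfolding O_disc_def disc_eq[OF assms(1)] mem_Collect_eq .

lemma O_bij: "0 < D \<Longrightarrow> f \<in> O_disc 2 (-2*D) \<Longrightarrow> bij_betw f (enc D ` G D) (enc D ` G D)"
  using O_unf by (rule conjunct1)

lemma O_hom: assumes "0 < D" "f \<in> O_disc 2 (-2*D)" "x \<in> G D" "y \<in> G D"
  shows "f (enc D (addG D x y)) = disc_add (f (enc D x)) (f (enc D y))"
proof -
  have "f (disc_add (enc D x) (enc D y)) = disc_add (f (enc D x)) (f (enc D y))"
  proof -
    have h: "\<forall>x\<in>enc D ` G D. \<forall>y\<in>enc D ` G D. f (disc_add x y) = disc_add (f x) (f y)"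
      using O_unf[OF assms(1,2)] by (elim conjE)
    have ex: "enc D x \<in> enc D ` G D" using assms(3) by (rule imageI)
    have ey: "enc D y \<in> enc D ` G D" using assms(4) by (rule imageI)
    have h1: "\<forall>y\<in>enc D ` G D. f (disc_add (enc D x) y) = disc_add (f (enc D x)) (f y)"
      using h ex by (rule bspec)
    from h1 ey show ?thesis by (rule bspec)
  qed
  then show ?thesis unfolding add_enc[OF assms(1)] .
qed

lemma O_q: assumes "0 < D" "f \<in> O_disc 2 (-2*D)" "x \<in> G D"
  shows "cong_mod2 (diag_form 2 (-2*D) (f (enc D x)) (f (enc D x))) (diag_form 2 (-2*D) (enc D x) (enc D x))"
proof -
  have h: "\<forall>x\<in>enc D ` G D. cong_mod2 (diag_form 2 (-2*D) (f x) (f x)) (diag_form 2 (-2*D) x x)"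
    using O_unf[OF assms(1,2)] by (elim conjE)
  have "enc D x \<in> enc D ` G D" using assms(3) by (rule imageI)
  with h show ?thesis by (rule bspec)
qed

lemma O_out: assumes "0 < D" "f \<in> O_disc 2 (-2*D)" "y \<notin> enc D ` G D" shows "f y = y"
proof -
  have h: "\<forall>x. x \<notin> enc D ` G D \<longrightarrow> f x = x"
    using O_unf[OF assms(1,2)] by (elim conjE)
  then show ?thesis using assms(3) by blast
qed

lemma O_val: assumes "0 < D" "f \<in> O_disc 2 (-2*D)" "x \<in> G D"
  shows "inv (enc D) (f (enc D x)) \<in> G D \<and> f (enc D x) = enc D (inv (enc D) (f (enc D x)))"
proof -
  have "f (enc D x) \<in> enc D ` G D"
    by (rule bij_betw_apply[OF O_bij[OF assms(1,2)]]) (rule imageI[OF assms(3)])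
  then obtain y where "y \<in> G D" "f (enc D x) = enc D y" by blast
  then show ?thesis using assms(1) by simp
qed

lemma G_zero: "0 < D \<Longrightarrow> (0,0) \<in> G D" unfolding G_def by simp
lemma G_e1: "0 < D \<Longrightarrow> (1,0) \<in> G D" unfolding G_def by simp
lemma G_e2: "0 < D \<Longrightarrow> (0,1) \<in> G D" unfolding G_def by simp

lemma dvd_small: fixes M z :: int shows "M dvd z \<Longrightarrow> 0 \<le> z \<Longrightarrow> z < M \<Longrightarrow> z = 0"
proof (rule ccontr)
  assume "M dvd z" "0 \<le> z" "z < M" "z \<noteq> 0"
  then have "0 < z" by simp
  with \<open>M dvd z\<close> have "M \<le> z" by (rule zdvd_imp_le)
  then show False using \<open>z < M\<close> by simp
qed

lemma O_zero:
  assumes D: "0 < D" and f: "f \<in> O_disc 2 (-2*D)"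
  shows "f (enc D (0,0)) = enc D (0,0)"
proof -
  define z where "z = inv (enc D) (f (enc D (0,0)))"
  have z: "z \<in> G D" "f (enc D (0,0)) = enc D z" using O_val[OF D f G_zero[OF D]] unfolding z_def by auto
  have "addG D (0,0) (0,0) = (0,0)" unfolding addG_def by simp
  then have "f (enc D (0,0)) = disc_add (f (enc D (0,0))) (f (enc D (0,0)))"
    using O_hom[OF D f G_zero[OF D] G_zero[OF D]] by simp
  then have "enc D z = enc D (addG D z z)" using z add_enc[OF D] by simp
  then have zz: "z = addG D z z" using enc_eq_iff[OF D] by blast
  obtain z1 z2 where zs: "z = (z1, z2)" by (cases z)
  have m1: "z1 mod 2 = (z1 + z1) mod 2" and m2: "z2 mod (2*D) = (z2 + z2) mod (2*D)"
    using zz z(1) unfolding zs addG_def G_def by auto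
  have "2 dvd z1 - (z1 + z1)" using m1 by (rule mod_eq_dvd_iff[THEN iffD1])
  moreover have "2*D dvd z2 - (z2 + z2)" using m2 by (rule mod_eq_dvd_iff[THEN iffD1])
  ultimately have "2 dvd z1" "2*D dvd z2" by simp_all
  then have "z1 = 0" "z2 = 0" using z(1) unfolding zs G_def by (auto intro: dvd_small)
  then show ?thesis using z zs by simp
qed

lemma O_lin:
  assumes D: "0 < D" and f: "f \<in> O_disc 2 (-2*D)" and x: "x \<in> G D"
  shows "f (enc D x) = enc D (L D (fst (Phi D f)) (snd (Phi D f)) x)"
proof -
  define u where "u = fst (Phi D f)"
  define v where "v = snd (Phi D f)"
  have u: "u \<in> G D" "f (enc D (1,0)) = enc D u"
    using O_val[OF D f G_e1[OF D]] unfolding u_def Phi_def by auto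
  have v: "v \<in> G D" "f (enc D (0,1)) = enc D v"
    using O_val[OF D f G_e2[OF D]] unfolding v_def Phi_def by auto
  have main: "int k < 2*D \<Longrightarrow> a \<in> {0,1} \<Longrightarrow> f (enc D (a, int k)) = enc D (L D u v (a, int k))" for k a
  proof (induction k arbitrary: a)
    case 0
    then show ?case
    proof (cases "a = 0")
      case True then show ?thesis using O_zero[OF D f] L_zero by simp
    next
      case False then have "a = 1" using 0 by simp
      then show ?thesis using u L_G_id[OF D u(1)] by simp
    qed
  next
    case (Suc k)
    have ak: "(a, int k) \<in> G D" using Suc.prems unfolding G_def by auto
    have ad: "addG D (a, int k) (0,1) = (a, int (Suc k))"
      using Suc.prems unfolding addG_def by auto
    have "f (enc D (a, int (Suc k))) = disc_add (f (enc D (a, int k))) (f (enc D (0,1)))"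
      using O_hom[OF D f ak G_e2[OF D]] ad by simp
    also have "\<dots> = disc_add (enc D (L D u v (a, int k))) (enc D v)"
      using Suc.IH[of a] Suc.prems v by simp
    also have "\<dots> = enc D (addG D (L D u v (a, int k)) v)" by (rule add_enc[OF D])
    also have "addG D (L D u v (a, int k)) v = L D u v (a, int (Suc k))"
      using L_succ[of D u v "(a, int k)"] by (simp add: add.commute)
    finally show ?case .
  qed
  obtain a b where ab: "x = (a, b)" by (cases x)
  have "a \<in> {0,1}" "0 \<le> b" "b < 2*D" using x unfolding ab G_def by auto
  then have "f (enc D (a, int (nat b))) = enc D (L D u v (a, int (nat b)))"
    by (intro main) auto
  then show ?thesis unfolding ab u_def v_def using \<open>0 \<le> b\<close> by simp
qed


lemma O_qQ:
  assumes D: "0 < D" and f: "f \<in> O_disc 2 (-2*D)" and x: "x \<in> G D"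
  shows "4*D dvd Qf D (L D (fst (Phi D f)) (snd (Phi D f)) x) - Qf D x"
proof -
  have "cong_mod2 (diag_form 2 (-2*D) (f (enc D x)) (f (enc D x))) (diag_form 2 (-2*D) (enc D x) (enc D x))"
    by (rule O_q[OF D f x])
  then have "cong_mod2 (of_int (Qf D (L D (fst (Phi D f)) (snd (Phi D f)) x)) / of_int (2*D)) (of_int (Qf D x) / of_int (2*D))"
    unfolding O_lin[OF D f x] diag_enc[OF D] .
  then show ?thesis unfolding cong_enc[OF D] .
qed

lemma Phi_in:
  assumes D: "0 < D" and f: "f \<in> O_disc 2 (-2*D)"
  shows "Phi D f \<in> PP D"
proof -
  obtain u v where uv: "Phi D f = (u, v)" by (cases "Phi D f")
  have u: "u \<in> G D" using O_val[OF D f G_e1[OF D]] uv unfolding Phi_def by auto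
  have v: "v \<in> G D" using O_val[OF D f G_e2[OF D]] uv unfolding Phi_def by auto
  have lin: "x \<in> G D \<Longrightarrow> f (enc D x) = enc D (L D u v x)" for x
    using O_lin[OF D f] uv by simp
  have qq: "x \<in> G D \<Longrightarrow> 4*D dvd Qf D (L D u v x) - Qf D x" for x
    using O_qQ[OF D f] uv by (metis fst_conv snd_conv)
  obtain u1 u2 where us: "u = (u1, u2)" by (cases u)
  obtain v1 v2 where vs: "v = (v1, v2)" by (cases v)
  have L10: "L D u v (1,0) = u" by (rule L_G_id[OF D u])
  have L01: "L D u v (0,1) = v" by (rule L_G_id2[OF D v])
  have "addG D (1,0) (1,0) = (0,0)" unfolding addG_def by simp
  then have "f (enc D (0,0)) = disc_add (f (enc D (1,0))) (f (enc D (1,0)))"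
    using O_hom[OF D f G_e1[OF D] G_e1[OF D]] by simp
  then have "enc D (0,0) = enc D (addG D u u)"
    using O_zero[OF D f] lin[OF G_e1[OF D]] L10 add_enc[OF D] by simp
  then have "addG D u u = (0,0)" using enc_eq_iff[OF D] by simp
  then have "(u2 + u2) mod (2*D) = 0" unfolding us addG_def by simp
  then have "2*D dvd u2 + u2" by (simp add: dvd_eq_mod_eq_0)
  moreover have "u2 + u2 = 2 * u2" by simp
  ultimately have "2*D dvd 2 * u2" by (simp only:)
  then have c0: "2*D dvd 2 * snd u" unfolding us by (simp only: snd_conv)
  have Q10: "Qf D (1,0) = D" by (simp add: Qf_def)
  have Q01: "Qf D (0,1) = -1" by (simp add: Qf_def)
  have c1: "4*D dvd Qf D u - D" using qq[OF G_e1[OF D]] unfolding L10 Q10 .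
  have "4*D dvd Qf D v - (-1)" using qq[OF G_e2[OF D]] unfolding L01 Q01 .
  then have c2: "4*D dvd Qf D v + 1" by simp
  have G11: "(1,1) \<in> G D" using D unfolding G_def by simp
  have h11: "4*D dvd Qf D (L D u v (1,1)) - Qf D (1,1)" by (rule qq[OF G11])
  have L11: "L D u v (1,1) = ((u1 + v1) mod 2, (u2 + v2) mod (2*D))" unfolding L_def us vs by simp
  have hm: "4*D dvd Qf D (L D u v (1,1)) - Qf D (u1 + v1, u2 + v2)" unfolding L11 by (rule Qf_mod)
  have "4*D dvd (Qf D (L D u v (1,1)) - Qf D (1,1)) - (Qf D (L D u v (1,1)) - Qf D (u1 + v1, u2 + v2))"
    using h11 hm by (rule dvd_diff)
  then have h2: "4*D dvd Qf D (u1 + v1, u2 + v2) - Qf D (1,1)" by simp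
  have e: "Qf D (u1 + v1, u2 + v2) - Qf D (1,1) = (Qf D u - D) + (Qf D v + 1) + 2 * (D * u1 * v1 - u2 * v2)"
    unfolding us vs Qf_def by (simp add: power2_eq_square algebra_simps)
  have "4*D dvd (Qf D (u1 + v1, u2 + v2) - Qf D (1,1)) - (Qf D u - D) - (Qf D v + 1)"
    by (rule dvd_diff[OF dvd_diff[OF h2 c1] c2])
  moreover define X where "X = D * u1 * v1 - u2 * v2"
  ultimately have "2 * (2*D) dvd 2 * X" unfolding e by simp
  then have "2*D dvd X" using dvd_times_left_cancel_iff[of 2 "2*D" X] by simp
  then have c3: "2*D dvd D * fst u * fst v - snd u * snd v" unfolding us vs X_def by simp
  have inj: "inj_on (L D u v) (G D)"
  proof
    fix x y assume x: "x \<in> G D" and y: "y \<in> G D" and e: "L D u v x = L D u v y"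
    have "f (enc D x) = f (enc D y)" using lin[OF x] lin[OF y] e by simp
    moreover have "inj_on f (enc D ` G D)" using O_bij[OF D f] by (simp add: bij_betw_def)
    ultimately have "enc D x = enc D y" using x y by (meson imageI inj_on_def)
    then show "x = y" using enc_eq_iff[OF D] by blast
  qed
  show ?thesis unfolding uv PP_def conds_def using u v c0 c1 c2 c3 inj by simp
qed

lemma Phi_inj:
  assumes D: "0 < D"
  shows "inj_on (Phi D) (O_disc 2 (-2*D))"
proof
  fix f g assume f: "f \<in> O_disc 2 (-2*D)" and g: "g \<in> O_disc 2 (-2*D)" and e: "Phi D f = Phi D g"
  show "f = g"
  proof
    fix y show "f y = g y"
    proof (cases "y \<in> enc D ` G D")
      case True
      then obtain x where x: "x \<in> G D" "y = enc D x" by blast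
      show ?thesis using O_lin[OF D f x(1)] O_lin[OF D g x(1)] e x(2) by simp
    next
      case False
      then show ?thesis using O_out[OF D f] O_out[OF D g] by simp
    qed
  qed
qed

lemma Fmap_enc: "0 < D \<Longrightarrow> x \<in> G D \<Longrightarrow> Fmap D u v (enc D x) = enc D (L D u v x)"
  unfolding Fmap_def by simp

lemma Fmap_in:
  assumes D: "0 < D" and p: "(u, v) \<in> PP D"
  shows "Fmap D u v \<in> O_disc 2 (-2*D)"
proof -
  have u: "u \<in> G D" and v: "v \<in> G D" and cd: "conds D u v" and inj: "inj_on (L D u v) (G D)"
    using p unfolding PP_def by auto
  have c0: "2*D dvd 2 * snd u" and c1: "4*D dvd Qf D u - D" and c2: "4*D dvd Qf D v + 1"
    and c3: "2*D dvd D * fst u * fst v - snd u * snd v" using cd unfolding conds_def by auto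
  let ?F = "Fmap D u v"
  let ?S = "enc D ` G D"
  have img: "?F ` ?S = enc D ` (L D u v ` G D)"
  proof -
    have "?F ` ?S = (?F \<circ> enc D) ` G D" by (simp add: image_comp)
    also have "\<dots> = (enc D \<circ> L D u v) ` G D"
      by (rule image_cong) (simp_all add: Fmap_enc[OF D])
    also have "\<dots> = enc D ` (L D u v ` G D)" by (simp add: image_comp)
    finally show ?thesis .
  qed
  have injF: "inj_on ?F ?S"
  proof
    fix x y assume "x \<in> ?S" "y \<in> ?S" and e: "?F x = ?F y"
    then obtain a b where a: "a \<in> G D" "x = enc D a" and b: "b \<in> G D" "y = enc D b" by blast
    have "enc D (L D u v a) = enc D (L D u v b)" using e a b Fmap_enc[OF D] by simp
    then have "L D u v a = L D u v b" using enc_eq_iff[OF D] by blast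
    then have "a = b" using inj a b by (meson inj_onD)
    then show "x = y" using a b by simp
  qed
  have sub: "?F ` ?S \<subseteq> ?S" unfolding img using L_in_G[OF D] by blast
  have "card (?F ` ?S) = card ?S" using injF by (rule card_image)
  then have "?F ` ?S = ?S" using sub by (intro card_subset_eq) auto
  then have bij: "bij_betw ?F ?S ?S" using injF by (simp add: bij_betw_def)
  have hom: "\<forall>x\<in>?S. \<forall>y\<in>?S. ?F (disc_add x y) = disc_add (?F x) (?F y)"
  proof (intro ballI)
    fix x y assume "x \<in> ?S" "y \<in> ?S"
    then obtain a b where a: "a \<in> G D" "x = enc D a" and b: "b \<in> G D" "y = enc D b" by blast
    have ab: "addG D a b \<in> G D" using D unfolding addG_def G_def by simp
    have "?F (disc_add x y) = enc D (L D u v (addG D a b))"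
      unfolding a b add_enc[OF D] using Fmap_enc[OF D ab] .
    also have "\<dots> = enc D (addG D (L D u v a) (L D u v b))" using L_add[OF D c0] by simp
    also have "\<dots> = disc_add (?F x) (?F y)"
      unfolding a b Fmap_enc[OF D a(1)] Fmap_enc[OF D b(1)] add_enc[OF D] ..
    finally show "?F (disc_add x y) = disc_add (?F x) (?F y)" .
  qed
  have q: "\<forall>x\<in>?S. cong_mod2 (diag_form 2 (-2*D) (?F x) (?F x)) (diag_form 2 (-2*D) x x)"
  proof
    fix x assume "x \<in> ?S"
    then obtain a where a: "a \<in> G D" "x = enc D a" by blast
    have "4*D dvd Qf D (L D u v a) - Qf D a" by (rule Qf_L[OF c1 c2 c3])
    then have "cong_mod2 (of_int (Qf D (L D u v a)) / of_int (2*D)) (of_int (Qf D a) / of_int (2*D))"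
      unfolding cong_enc[OF D] .
    then show "cong_mod2 (diag_form 2 (-2*D) (?F x) (?F x)) (diag_form 2 (-2*D) x x)"
      unfolding a(2) Fmap_enc[OF D a(1)] diag_enc[OF D] .
  qed
  have out: "\<forall>x. x \<notin> ?S \<longrightarrow> ?F x = x" unfolding Fmap_def by simp
  show ?thesis unfolding O_disc_def disc_eq[OF D] mem_Collect_eq
    using bij hom q out by blast
qed

lemma Phi_Fmap:
  assumes D: "0 < D" and p: "(u, v) \<in> PP D"
  shows "Phi D (Fmap D u v) = (u, v)"
proof -
  have u: "u \<in> G D" and v: "v \<in> G D" using p unfolding PP_def by auto
  show ?thesis unfolding Phi_def Fmap_enc[OF D G_e1[OF D]] Fmap_enc[OF D G_e2[OF D]]
    L_G_id[OF D u] L_G_id2[OF D v] using D by simp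
qed

lemma card_O:
  assumes D: "0 < D"
  shows "card (O_disc 2 (-2*D)) = card (PP D)"
proof -
  have "bij_betw (Phi D) (O_disc 2 (-2*D)) (PP D)"
  proof (unfold bij_betw_def, intro conjI)
    show "inj_on (Phi D) (O_disc 2 (-2*D))" by (rule Phi_inj[OF D])
    show "Phi D ` O_disc 2 (-2*D) = PP D"
    proof
      show "Phi D ` O_disc 2 (-2*D) \<subseteq> PP D" using Phi_in[OF D] by blast
    next
      show "PP D \<subseteq> Phi D ` O_disc 2 (-2*D)"
      proof
        fix p assume p: "p \<in> PP D"
        obtain u v where uv: "p = (u, v)" by (cases p)
        have "Phi D (Fmap D u v) = p" using Phi_Fmap[OF D] p uv by simp
        moreover have "Fmap D u v \<in> O_disc 2 (-2*D)" using Fmap_in[OF D] p uv by simp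
        ultimately show "p \<in> Phi D ` O_disc 2 (-2*D)" by blast
      qed
    qed
  qed
  then show ?thesis by (rule bij_betw_same_card)
qed


lemma cancelD: fixes D c k :: int assumes "0 < D" shows "c*D dvd D*k \<longleftrightarrow> c dvd k"
proof -
  have "c*D dvd D*k \<longleftrightarrow> c*D dvd k*D" by (simp add: mult.commute)
  also have "\<dots> \<longleftrightarrow> c dvd k" using assms by simp
  finally show ?thesis .
qed

lemma not_dvd_small: fixes M z :: int assumes "z \<noteq> 0" "\<bar>z\<bar> < M" shows "\<not> M dvd z"
  using dvd_small_abs assms by blast

lemma inj1:
  assumes D: "0 < D" and t: "t \<in> T1 D"
  shows "inj_on (L D (1,0) (0,t)) (G D)"
proof
  fix x y assume x: "x \<in> G D" and y: "y \<in> G D" and e: "L D (1,0) (0,t) x = L D (1,0) (0,t) y"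
  obtain a b where xs: "x = (a, b)" by (cases x)
  obtain a' b' where ys: "y = (a', b')" by (cases y)
  have r: "a \<in> {0,1}" "a' \<in> {0,1}" "b \<in> {0..<2*D}" "b' \<in> {0..<2*D}" using x y unfolding xs ys G_def by auto
  have e1: "a mod 2 = a' mod 2" and e2: "(b*t) mod (2*D) = (b'*t) mod (2*D)"
    using e unfolding xs ys L_def by auto
  have "a = a'" using e1 r by auto
  have "4*D dvd t*t - 1" using t unfolding T1_def by (simp add: power2_eq_square)
  then have "2*D dvd t*t - 1" by (rule dvd_trans[rotated]) simp
  then have "inj_on (\<lambda>b. (b*t) mod (2*D)) {0..<2*D}" by (rule inj_mult) simp
  then have "b = b'" using e2 r by (meson inj_onD)
  then show "x = y" using \<open>a = a'\<close> xs ys by simp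
qed

lemma inj2:
  assumes D: "0 < D" and t: "t \<in> T2 D" and al: "al \<in> {0,1}" and par: "2 dvd t - al"
  shows "inj_on (L D (al, D) (1,t)) (G D)"
proof
  fix x y assume x: "x \<in> G D" and y: "y \<in> G D" and e: "L D (al, D) (1,t) x = L D (al, D) (1,t) y"
  obtain a b where xs: "x = (a, b)" by (cases x)
  obtain a' b' where ys: "y = (a', b')" by (cases y)
  have r: "a \<in> {0,1}" "a' \<in> {0,1}" "b \<in> {0..<2*D}" "b' \<in> {0..<2*D}" using x y unfolding xs ys G_def by auto
  have e1: "(a*al + b) mod 2 = (a'*al + b') mod 2" and e2: "(a*D + b*t) mod (2*D) = (a'*D + b'*t) mod (2*D)"
    using e unfolding xs ys L_def by auto
  define A where "A = a - a'"
  define B where "B = b - b'"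
  have h1: "2 dvd A*al + B" using e1 unfolding A_def B_def by (simp add: mod_eq_dvd_iff algebra_simps)
  have h2: "2*D dvd A*D + B*t" using e2 unfolding A_def B_def by (simp add: mod_eq_dvd_iff algebra_simps)
  have "4*D dvd t^2 - D - 1" using t unfolding T2_def by simp
  then have h3: "2*D dvd t^2 - D - 1" by (rule dvd_trans[rotated]) simp
  have "2 dvd A*(t - al) + (A*al + B)" using par h1 by simp
  then have "2 dvd A*t + B" by (simp add: algebra_simps)
  then have h4: "2*D dvd D*(A*t + B)" using cancelD[OF D] by simp
  have "2*D dvd (A*D + B*t)*t - B*(t^2 - D - 1) - D*(A*t + B)"
    by (rule dvd_diff[OF dvd_diff[OF dvd_mult2[OF h2] dvd_mult[OF h3]] h4])
  moreover have "(A*D + B*t)*t - B*(t^2 - D - 1) - D*(A*t + B) = B"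
    by (simp add: power2_eq_square algebra_simps)
  ultimately have "2*D dvd B" by simp
  moreover have "\<bar>B\<bar> < 2*D" using r unfolding B_def by auto
  ultimately have "B = 0" by (rule dvd_small_abs)
  then have "2*D dvd A*D" using h2 by simp
  moreover have "A \<in> {-1, 0, 1}" using r unfolding A_def by auto
  ultimately have "A = 0" using D by (auto simp: not_dvd_small)
  show "x = y" using \<open>A = 0\<close> \<open>B = 0\<close> xs ys unfolding A_def B_def by simp
qed


definition al0 :: "int \<Rightarrow> int" where "al0 D = (if D mod 4 = 3 then 0 else 1)"

lemma PP_sub:
  assumes D: "0 < D" and p: "(u, v) \<in> PP D"
  shows "(u = (1,0) \<and> fst v = 0 \<and> snd v \<in> T1 D) \<or>
         ((D mod 4 = 3 \<or> 4 dvd D) \<and> u = (al0 D, D) \<and> fst v = 1 \<and> snd v \<in> T2 D)"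
proof -
  obtain al be where us: "u = (al, be)" by (cases u)
  obtain s t where vs: "v = (s, t)" by (cases v)
  have r: "al \<in> {0,1}" "0 \<le> be" "be < 2*D" "s \<in> {0,1}" "0 \<le> t" "t < 2*D"
    using p unfolding PP_def G_def us vs by auto
  have cd: "conds D u v" using p unfolding PP_def by auto
  have c0: "2*D dvd 2*be" and c1: "4*D dvd D*al^2 - be^2 - D" and c2: "4*D dvd D*s^2 - t^2 + 1"
    and c3: "2*D dvd D*al*s - be*t"
    using cd unfolding conds_def us vs Qf_def by (auto simp: algebra_simps)
  obtain c where c: "0 \<le> c" "c < 2" "2*be = 2*D*c"
    using dvd_range[of "2*D" "2*be" 2] c0 r D by auto
  have "be = 0 \<or> be = D" using c by (cases "c = 0") auto
  then show ?thesis
  proof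
    assume b0: "be = 0"
    have "al = 1"
    proof (rule ccontr)
      assume "al \<noteq> 1" then have "al = 0" using r by auto
      then have "4*D dvd -D" using c1 b0 by simp
      moreover have "\<not> 4*D dvd -D" by (rule not_dvd_small) (use D in auto)
      ultimately show False by simp
    qed
    have "s = 0"
    proof (rule ccontr)
      assume "s \<noteq> 0" then have "s = 1" using r by auto
      then have "2*D dvd D" using c3 b0 \<open>al = 1\<close> by simp
      moreover have "\<not> 2*D dvd D" by (rule not_dvd_small) (use D in auto)
      ultimately show False by simp
    qed
    have "4*D dvd -(t^2 - 1)" using c2 \<open>s = 0\<close> by (simp add: algebra_simps)
    then have "4*D dvd t^2 - 1" by (simp only: dvd_minus_iff)
    then have "t \<in> T1 D" unfolding T1_def using r by simp
    then show ?thesis using us vs b0 \<open>al = 1\<close> \<open>s = 0\<close> by simp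
  next
    assume bD: "be = D"
    have c3': "2*D dvd D*(al*s - t)" using c3 bD by (simp add: algebra_simps)
    then have p3: "2 dvd al*s - t" using cancelD[OF D] by simp
    have "s = 1"
    proof (rule ccontr)
      assume "s \<noteq> 1" then have "s = 0" using r by auto
      then have "2 dvd t" using p3 by simp
      have "4*D dvd -(t^2 - 1)" using c2 \<open>s = 0\<close> by (simp add: algebra_simps)
      then have "4*D dvd t^2 - 1" by (simp only: dvd_minus_iff)
      then have "2 dvd t^2 - 1" by (rule dvd_trans[rotated]) simp
      then have "odd t" by (rule odd_of_sq)
      then show False using \<open>2 dvd t\<close> by simp
    qed
    have "4*D dvd -(t^2 - D - 1)" using c2 \<open>s = 1\<close> by (simp add: algebra_simps)
    then have "4*D dvd t^2 - D - 1" by (simp only: dvd_minus_iff)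
    then have tT: "t \<in> T2 D" unfolding T2_def using r by simp
    have "(D mod 4 = 3 \<or> 4 dvd D) \<and> al = al0 D"
    proof (cases "al = 0")
      case True
      then have "4*D dvd D*(-(D + 1))" using c1 bD by (simp add: power2_eq_square algebra_simps)
      then have "4 dvd -(D + 1)" using cancelD[OF D] by blast
      then have "D mod 4 = 3" by presburger
      then show ?thesis using True unfolding al0_def by simp
    next
      case False
      then have "al = 1" using r by auto
      then have "4*D dvd D*(-D)" using c1 bD by (simp add: power2_eq_square algebra_simps)
      then have "4 dvd -D" using cancelD[OF D] by blast
      then have "4 dvd D" by simp
      then have "D mod 4 \<noteq> 3" by presburger
      then show ?thesis using \<open>al = 1\<close> \<open>4 dvd D\<close> unfolding al0_def by simp
    qed
    then show ?thesis using us vs bD \<open>s = 1\<close> tT by simp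
  qed
qed

lemma PP_sup1:
  assumes D: "0 < D" and t: "t \<in> T1 D"
  shows "((1,0),(0,t)) \<in> PP D"
proof -
  have g: "(1,0) \<in> G D" "(0,t) \<in> G D" using D t unfolding G_def T1_def by auto
  have "4*D dvd t^2 - 1" using t unfolding T1_def by simp
  then have "4*D dvd -(t^2 - 1)" by (simp only: dvd_minus_iff)
  then have "conds D (1,0) (0,t)" unfolding conds_def Qf_def by (simp add: algebra_simps)
  then show ?thesis unfolding PP_def using g inj1[OF D t] by simp
qed

lemma PP_sup2:
  assumes D: "0 < D" and t: "t \<in> T2 D" and cnd: "D mod 4 = 3 \<or> 4 dvd D"
  shows "((al0 D, D),(1,t)) \<in> PP D"
proof -
  have al: "al0 D \<in> {0,1}" unfolding al0_def by simp
  have g: "(al0 D, D) \<in> G D" "(1,t) \<in> G D" using D t al unfolding G_def T2_def by auto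
  have d: "4*D dvd t^2 - D - 1" using t unfolding T2_def by simp
  then have "2 dvd t^2 - D - 1" by (rule dvd_trans[rotated]) simp
  then have par: "2 dvd t - al0 D"
  proof -
    assume h: "2 dvd t^2 - D - 1"
    have aux1: "2 dvd (q::int) - D - 1 \<Longrightarrow> D mod 4 = 3 \<Longrightarrow> 2 dvd q" for q by presburger
    have aux2: "2 dvd (q::int) - D - 1 \<Longrightarrow> 4 dvd D \<Longrightarrow> odd q" for q by presburger
    show ?thesis
    proof (cases "D mod 4 = 3")
      case True
      then have "even (t^2)" using aux1[OF h] by simp
      then show ?thesis using True unfolding al0_def by simp
    next
      case False
      then have "4 dvd D" using cnd by simp
      then have "odd (t^2)" using aux2[OF h] by simp
      then show ?thesis using False unfolding al0_def by simp
    qed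
  qed
  have c1: "4*D dvd Qf D (al0 D, D) - D"
  proof (cases "D mod 4 = 3")
    case True
    then have "4 dvd -(D + 1)" by presburger
    then have "4*D dvd D*(-(D + 1))" using cancelD[OF D] by blast
    then show ?thesis using True unfolding al0_def Qf_def by (simp add: power2_eq_square algebra_simps)
  next
    case False
    then have "4 dvd -D" using cnd by simp
    then have "4*D dvd D*(-D)" using cancelD[OF D] by blast
    then show ?thesis using False unfolding al0_def Qf_def by (simp add: power2_eq_square algebra_simps)
  qed
  have c2: "4*D dvd Qf D (1,t) + 1"
  proof -
    have "4*D dvd -(t^2 - D - 1)" using d by (simp only: dvd_minus_iff)
    then show ?thesis unfolding Qf_def by (simp add: algebra_simps)
  qed
  have c3: "2*D dvd D * al0 D * 1 - D * t"
  proof -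
    have "2 dvd -(t - al0 D)" using par by (simp only: dvd_minus_iff)
    then have "2*D dvd D*(-(t - al0 D))" using cancelD[OF D] by blast
    then show ?thesis by (simp add: algebra_simps)
  qed
  have "conds D (al0 D, D) (1,t)" unfolding conds_def using c1 c2 c3 by simp
  then show ?thesis unfolding PP_def using g inj2[OF D t al par] by simp
qed


lemma card_PP:
  assumes D: "0 < D"
  shows "card (PP D) = card (T1 D) + (if D mod 4 = 3 \<or> 4 dvd D then card (T2 D) else 0)"
proof -
  define A where "A = (\<lambda>t. ((1::int,0::int),(0::int,t))) ` T1 D"
  define B0 where "B0 = (\<lambda>t. ((al0 D, D),(1::int,t))) ` T2 D"
  define B where "B = (if D mod 4 = 3 \<or> 4 dvd D then B0 else {})"
  have eq: "PP D = A \<union> B"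
  proof (intro set_eqI iffI)
    fix p assume p: "p \<in> PP D"
    obtain u v where uv: "p = (u, v)" by (cases p)
    from PP_sub[OF D p[unfolded uv]]
    show "p \<in> A \<union> B"
    proof
      assume h: "u = (1,0) \<and> fst v = 0 \<and> snd v \<in> T1 D"
      then have "p = ((1,0),(0, snd v))" using uv by (cases v) auto
      then show ?thesis using h unfolding A_def by blast
    next
      assume h: "(D mod 4 = 3 \<or> 4 dvd D) \<and> u = (al0 D, D) \<and> fst v = 1 \<and> snd v \<in> T2 D"
      then have "p = ((al0 D, D),(1, snd v))" using uv by (cases v) auto
      then show ?thesis using h unfolding B_def B0_def by auto
    qed
  next
    fix p assume "p \<in> A \<union> B"
    then show "p \<in> PP D"
    proof
      assume "p \<in> A" then show ?thesis using PP_sup1[OF D] unfolding A_def by blast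
    next
      assume h: "p \<in> B"
      then have c: "D mod 4 = 3 \<or> 4 dvd D" unfolding B_def by (simp split: if_splits)
      then have "p \<in> B0" using h unfolding B_def by simp
      then obtain t where t: "t \<in> T2 D" "p = ((al0 D, D),(1,t))" unfolding B0_def by blast
      then show ?thesis using PP_sup2[OF D t(1) c] by simp
    qed
  qed
  have disj: "A \<inter> B = {}" using D unfolding A_def B_def B0_def by auto
  have cA: "card A = card (T1 D)" unfolding A_def by (rule card_image) (simp add: inj_on_def)
  have cB0: "card B0 = card (T2 D)" unfolding B0_def by (rule card_image) (simp add: inj_on_def)
  have fA: "finite A" "finite B" unfolding A_def B_def B0_def by simp_all
  have "card (PP D) = card A + card B" unfolding eq
    by (rule card_Un_disjoint) (use disj fA in auto)
  then show ?thesis using cA cB0 unfolding B_def by simp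
qed

theorem lemma4p4:
  fixes d :: nat
  assumes "d > 0"
  shows "card (O_disc 2 (- 2 * int d)) =
           (if d mod 4 = 3 \<or> 8 dvd d
            then 2 ^ (1 + card (prime_factors d))
            else 2 ^ card (prime_factors d))"
proof -
  define D where "D = int d"
  have D: "0 < D" unfolding D_def using assms by simp
  have c1: "card (T1 D) = 2 ^ card (prime_factors d)" unfolding D_def by (rule card_T1[OF assms])
  have cO: "card (O_disc 2 (- 2 * int d)) = card (T1 D) + (if D mod 4 = 3 \<or> 4 dvd D then card (T2 D) else 0)"
    using card_O[OF D] card_PP[OF D] unfolding D_def by simp
  have m4: "D mod 4 = 3 \<longleftrightarrow> d mod 4 = 3" unfolding D_def by presburger
  have m8: "8 dvd D \<longleftrightarrow> 8 dvd d" unfolding D_def by presburger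
  show ?thesis
  proof (cases "d mod 4 = 3 \<or> 8 dvd d")
    case True
    have "card (T2 D) = card (T1 D)"
    proof (cases "d mod 4 = 3")
      case True then show ?thesis using T2_3[OF D] m4 by simp
    next
      case False then have "8 dvd D" using \<open>d mod 4 = 3 \<or> 8 dvd d\<close> m8 by simp
      then show ?thesis using T2_8[OF D] by simp
    qed
    moreover have "D mod 4 = 3 \<or> 4 dvd D" using True m4 m8 by presburger
    ultimately show ?thesis using cO c1 True by simp
  next
    case False
    have "(if D mod 4 = 3 \<or> 4 dvd D then card (T2 D) else 0) = 0"
    proof (cases "4 dvd D")
      case True
      then have "D mod 8 = 4" using False m8 by presburger
      then show ?thesis using T2_4[OF D] by simp
    next
      case False
      then show ?thesis using \<open>\<not> (d mod 4 = 3 \<or> 8 dvd d)\<close> m4 by simp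
    qed
    then show ?thesis using cO c1 False by simp
  qed
qed

end
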